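(* Let $k\ge 1$ and let $G$ be an $\mathcal{O}_k$-free graph of minimum degree at least 2. If $x$ is a vertex of degree $d$ in $G$, then $r(G)-r(G-x)\ge \frac{d-k+1}{2}$.
   Context: All graphs are finite and simple. The cycle rank of a graph $G$ is $r(G)=|E(G)|-|V(G)|+|\mathcal{C}(G)|$, where $\mathcal{C}(G)$ is the set of connected components of $G$. Two vertex-disjoint subgraphs are independent if there is no edge between them. A graph $G$ is $\mathcal{O}_k$-free if it does not contain $k$ pairwise vertex-disjoint and pairwise independent cycles; equivalently, $G$ has no induced subgraph isomorphic to a disjoint union of $k$ cycles. *)

theory Defs
  imports Complex_Main
begin

definition graph :: "'a set \<Rightarrow> 'a set set \<Rightarrow> bool" where
  "graph V E \<longleftrightarrow> finite V \<and> (\<forall>e\<in>E. e \<subseteq> V \<and> card e = 2)"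

definition degree :: "'a set set \<Rightarrow> 'a \<Rightarrow> nat" where
  "degree E v = card {e\<in>E. v \<in> e}"

definition adj_rel :: "'a set set \<Rightarrow> ('a \<times> 'a) set" where
  "adj_rel E = {(u,v). {u,v} \<in> E}"

definition components :: "'a set \<Rightarrow> 'a set set \<Rightarrow> 'a set set" where
  "components V E = (\<lambda>v. {u\<in>V. (v,u) \<in> (adj_rel E)\<^sup>*}) ` V"

definition cycle_rank :: "'a set \<Rightarrow> 'a set set \<Rightarrow> int" where
  "cycle_rank V E = int (card E) - int (card V) + int (card (components V E))"

definition del_vertex_V :: "'a set \<Rightarrow> 'a \<Rightarrow> 'a set" where
  "del_vertex_V V x = V - {x}"
definition del_vertex_E :: "'a set set \<Rightarrow> 'a \<Rightarrow> 'a set set" where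
  "del_vertex_E E x = {e\<in>E. x \<notin> e}"

definition is_cycle :: "'a set set \<Rightarrow> 'a set \<Rightarrow> bool" where
  "is_cycle E C \<longleftrightarrow> (\<exists>xs. distinct xs \<and> length xs \<ge> 3 \<and> set xs = C \<and>
     (\<forall>i. Suc i < length xs \<longrightarrow> {xs ! i, xs ! Suc i} \<in> E) \<and> {last xs, hd xs} \<in> E)"

definition Ok_free :: "nat \<Rightarrow> 'a set \<Rightarrow> 'a set set \<Rightarrow> bool" where
  "Ok_free k V E \<longleftrightarrow> \<not> (\<exists>Cs :: nat \<Rightarrow> 'a set.
      (\<forall>i<k. Cs i \<subseteq> V \<and> is_cycle E (Cs i)) \<and>
      (\<forall>i<k. \<forall>j<k. i \<noteq> j \<longrightarrow> Cs i \<inter> Cs j = {} \<and> (\<forall>u\<in>Cs i. \<forall>v\<in>Cs j. {u,v} \<notin> E)))"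

end

theory Submission
  imports Defs
begin

lemma two_elem: assumes "card e = 2" "x \<in> e" shows "\<exists>w. e = {x,w} \<and> w \<noteq> x"
proof -
  obtain a b where ab: "e = {a,b}" "a \<noteq> b" using assms(1) card_2_iff by metis
  show ?thesis using assms(2) ab by (metis insert_commute empty_iff insert_iff)
qed

lemma two_distinct: assumes "finite S" "2 \<le> card S" shows "\<exists>a\<in>S. \<exists>b\<in>S. a \<noteq> b"
  using assms card_le_Suc0_iff_eq[of S] by fastforce

lemma is_cycle_mono: "F \<subseteq> E \<Longrightarrow> is_cycle F C \<Longrightarrow> is_cycle E C"
  unfolding is_cycle_def by blast

lemma cycle_exists:
  assumes fin: "finite W" and F: "\<forall>e\<in>F. e \<subseteq> W \<and> card e = 2" and v0: "v0 \<in> W"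
    and deg: "\<forall>v\<in>W-{v0}. 2 \<le> card {e\<in>F. v\<in>e}" and d0: "{e\<in>F. v0\<in>e} \<noteq> {}"
  shows "\<exists>C\<subseteq>W. is_cycle F C"
proof -
  have finF: "finite F" using fin F by (meson Pow_iff finite_Pow_iff finite_subset subsetI)
  define path where "path p \<longleftrightarrow> distinct p \<and> p \<noteq> [] \<and> set p \<subseteq> W \<and> last p = v0 \<and>
      (\<forall>i. Suc i < length p \<longrightarrow> {p!i, p!Suc i} \<in> F)" for p
  have main: "path p \<Longrightarrow> \<exists>C\<subseteq>W. is_cycle F C" for p
  proof (induction "card W - length p" arbitrary: p rule: less_induct)
    case less
    have pp: "distinct p" "p \<noteq> []" "set p \<subseteq> W" "last p = v0"
      "\<And>i. Suc i < length p \<Longrightarrow> {p!i, p!Suc i} \<in> F" using less(2) unfolding path_def by auto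
    obtain u q where p: "p = u # q" using pp(2) by (cases p) auto
    show ?case
    proof (cases "\<exists>w. {u,w}\<in>F \<and> w \<notin> set p")
      case True
      then obtain w where w: "{u,w}\<in>F" "w \<notin> set p" by blast
      have wW: "w \<in> W" using w(1) F by blast
      have pw: "path (w#p)" unfolding path_def
      proof (intro conjI allI impI)
        show "distinct (w#p)" using pp(1) w(2) by simp
        show "set (w#p) \<subseteq> W" using pp(3) wW by simp
        show "last (w#p) = v0" using pp(2,4) by simp
        fix i assume i: "Suc i < length (w#p)"
        show "{(w#p)!i, (w#p)!Suc i} \<in> F"
        proof (cases i)
          case 0 then show ?thesis using w(1) p by (simp add: insert_commute)
        next
          case (Suc j) then show ?thesis using i pp(5)[of j] by simp
        qed
      qed auto
      have "length (w#p) \<le> card W"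
        using pw unfolding path_def by (metis card_mono distinct_card fin)
      hence "card W - length (w#p) < card W - length p" by simp
      then show ?thesis using less(1) pw by blast
    next
      case False
      hence nb: "\<And>w. {u,w}\<in>F \<Longrightarrow> w \<in> set p" by blast
      show ?thesis
      proof (cases "q = []")
        case True
        hence "u = v0" using pp(4) p by simp
        then obtain e where e: "e\<in>F" "u \<in> e" using d0 by blast
        then obtain w where "e = {u,w}" "w \<noteq> u" using two_elem F by metis
        then show ?thesis using nb e True p by auto
      next
        case False
        have "last q \<in> set q" using False by simp
        hence "u \<noteq> v0" using pp(1,4) p False by auto
        hence "2 \<le> card {e\<in>F. u\<in>e}" using deg p pp(3) by auto
        then obtain e1 e2 where e: "e1\<in>F" "u\<in>e1" "e2\<in>F" "u\<in>e2" "e1\<noteq>e2"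
          using two_distinct[of "{e\<in>F. u\<in>e}"] finF by auto
        obtain w1 where w1: "e1 = {u,w1}" "w1\<noteq>u" using two_elem F e by metis
        obtain w2 where w2: "e2 = {u,w2}" "w2\<noteq>u" using two_elem F e by metis
        have "w1 \<in> set q" "w2 \<in> set q" using nb e w1 w2 p by auto
        moreover have "w1 \<noteq> w2" using w1 w2 e by auto
        ultimately obtain w where w: "w \<in> set q" "w \<noteq> q!0" "{u,w}\<in>F"
          using e w1 w2 by metis
        then obtain j where j: "j < length q" "q!j = w" by (meson in_set_conv_nth)
        have j0: "j \<noteq> 0" using j w by (metis)
        define xs where "xs = take (Suc (Suc j)) p"
        have lxs: "length xs = Suc (Suc j)" using j p xs_def by simp
        have nxs: "\<And>i. i < Suc (Suc j) \<Longrightarrow> xs!i = p!i" using xs_def by simp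
        have "is_cycle F (set xs)" unfolding is_cycle_def
        proof (intro exI conjI allI impI)
          show "distinct xs" using pp(1) xs_def by simp
          show "3 \<le> length xs" using lxs j0 by simp
          fix i assume "Suc i < length xs"
          then show "{xs!i, xs!Suc i} \<in> F" using lxs nxs pp(5)[of i] j p by simp
        next
          have "last xs = q!j" using lxs nxs[of "Suc j"] p by (metis diff_Suc_1 last_conv_nth list.size(3) nat.distinct(1) nth_Cons_Suc lessI)
          moreover have "hd xs = u" using xs_def p by simp
          ultimately show "{last xs, hd xs} \<in> F" using w j by (simp add: insert_commute)
        qed simp
        moreover have "set xs \<subseteq> W" using xs_def pp(3) by (meson set_take_subset subset_trans)
        ultimately show ?thesis by blast
      qed
    qed
  qed
  have "path [v0]" unfolding path_def using v0 by simp
  thus ?thesis using main by blast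
qed

theorem mainTheorem13:
  fixes V :: "'a set" and E :: "'a set set" and k :: nat and x :: 'a
  assumes "graph V E"
    and "k \<ge> 1"
    and "Ok_free k V E"
    and "\<forall>v\<in>V. degree E v \<ge> 2"
    and "x \<in> V"
  shows "real_of_int (cycle_rank V E - cycle_rank (del_vertex_V V x) (del_vertex_E E x))
           \<ge> (real (degree E x) - real k + 1) / 2"
proof -
  have finV: "finite V" and Eg: "\<And>e. e\<in>E \<Longrightarrow> e \<subseteq> V \<and> card e = 2"
    using assms(1) unfolding graph_def by auto
  have finE: "finite E" using finV Eg by (meson Pow_iff finite_Pow_iff finite_subset subsetI)
  define Vx where "Vx = V - {x}"
  define Ex where "Ex = {e\<in>E. x \<notin> e}"
  define R where "R = (adj_rel Ex)\<^sup>*"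
  define comp where "comp v = {u\<in>Vx. (v,u)\<in>R}" for v
  define KS where "KS = comp ` Vx"
  define N where "N = {w. {x,w}\<in>E}"
  define Xe where "Xe = {e\<in>E. x\<in>e}"
  define d where "d = degree E x"
  have dXe: "card Xe = d" unfolding d_def Xe_def degree_def by simp
  have KSc: "KS = components Vx Ex" unfolding KS_def comp_def components_def R_def by simp
  have symR: "sym R" unfolding R_def
    by (rule sym_rtrancl) (auto simp: sym_def adj_rel_def insert_commute)
  have transR: "trans R" unfolding R_def by (rule trans_rtrancl)
  have F4: "comp a = comp b" if "(a,b)\<in>R" for a b
    unfolding comp_def using that symR transR by (meson symD transD)
  have F5: "a \<in> comp a" if "a\<in>Vx" for a unfolding comp_def R_def using that by simp
  have F6: "comp u = comp v" if "u \<in> comp v" for u v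
    using that F4 symR unfolding comp_def by (auto dest: symD)
  have KSsub: "K \<subseteq> Vx" if "K\<in>KS" for K using that unfolding KS_def comp_def by auto
  have F7: "K1 = K2" if "K1\<in>KS" "K2\<in>KS" "c\<in>K1" "c\<in>K2" for K1 K2 c
    using that unfolding KS_def by (metis F6 imageE)
  have adjE: "(u,w)\<in>R" if "{u,w}\<in>E" "u\<in>Vx" "w\<in>Vx" for u w
  proof -
    have "{u,w}\<in>Ex" using that unfolding Ex_def Vx_def by auto
    thus ?thesis unfolding R_def adj_rel_def by auto
  qed
  have F8: "K1 = K2" if "K1\<in>KS" "K2\<in>KS" "u\<in>K1" "w\<in>K2" "{u,w}\<in>E" for K1 K2 u w
  proof -
    have "u \<in> Vx" "w\<in>Vx" using that KSsub by auto
    hence "comp u = comp w" using adjE that F4 by blast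
    moreover have "K1 = comp u" "K2 = comp w" using that unfolding KS_def by (metis F6 imageE)+
    ultimately show ?thesis by simp
  qed
  have finKS: "finite KS" unfolding KS_def Vx_def using finV by simp
  have finK: "finite K" if "K\<in>KS" for K using that KSsub finV Vx_def by (meson finite_Diff finite_subset)
  define M where "M = {K\<in>KS. K \<inter> N \<noteq> {}}"
  define NM where "NM = KS - M"
  define Gc where "Gc v = {u\<in>V. (v,u) \<in> (adj_rel E)\<^sup>*}" for v
  have GcC: "Gc v \<in> components V E" if "v\<in>V" for v
    unfolding components_def Gc_def using that by simp
  have NMG: "K \<in> components V E" "x \<notin> K" if "K\<in>NM" for K
  proof -
    have "K \<in> KS" using that NM_def by simp
    then obtain v where v: "v\<in>Vx" "K = comp v" unfolding KS_def by auto
    have KN: "K \<inter> N = {}" using that unfolding NM_def M_def by auto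
    have "u \<in> comp v" if "(v,u) \<in> (adj_rel E)\<^sup>*" for u
      using that
    proof (induction rule: rtrancl_induct)
      case base then show ?case using F5 v by simp
    next
      case (step w u)
      have wK: "w \<in> K" using step v by simp
      have wV: "w \<in> Vx" using step comp_def by simp
      have wu: "{w,u}\<in>E" using step(2) unfolding adj_rel_def by simp
      have ux: "u \<noteq> x"
      proof
        assume "u = x"
        hence "w \<in> N" using wu unfolding N_def by (simp add: insert_commute)
        thus False using KN wK by blast
      qed
      have "u \<in> Vx" using Eg[OF wu] ux Vx_def by auto
      hence "(w,u)\<in>R" using adjE wu wV by simp
      hence "(v,u)\<in>R" using step(3) unfolding comp_def using transR by (auto dest: transD)
      then show ?case using \<open>u\<in>Vx\<close> comp_def by simp
    qed
    moreover have "comp v \<subseteq> Gc v"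
    proof
      fix u assume "u \<in> comp v"
      hence "u\<in>V" "(v,u)\<in>R" unfolding comp_def Vx_def by auto
      moreover have "adj_rel Ex \<subseteq> adj_rel E" unfolding adj_rel_def Ex_def by auto
      ultimately show "u \<in> Gc v" unfolding Gc_def R_def using rtrancl_mono by blast
    qed
    ultimately have "K = Gc v" using v unfolding Gc_def by auto
    thus "K \<in> components V E" using GcC v Vx_def by auto
    show "x \<notin> K" using v comp_def Vx_def by simp
  qed
  have finC: "finite (components V E)" unfolding components_def using finV by simp
  have xC: "Gc x \<in> components V E - NM" using GcC[OF assms(5)] NMG
    unfolding Gc_def using assms(5) by auto
  have c1: "card NM + 1 \<le> card (components V E)"
  proof -
    have "insert (Gc x) NM \<subseteq> components V E" using xC NMG by auto
    hence "card (insert (Gc x) NM) \<le> card (components V E)" using finC card_mono by blast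
    moreover have "finite NM" using finKS NM_def by simp
    ultimately show ?thesis using xC by simp
  qed
  have c2: "card KS = card M + card NM"
    unfolding NM_def using finKS M_def card_Diff_subset[of M KS] card_mono[of KS M] by force
  define T where "T K = {e\<in>Xe. e \<inter> K \<noteq> {}}" for K
  have xedge: "\<exists>w. e = {x,w} \<and> w \<noteq> x" if "e\<in>Xe" for e
  proof -
    have "e\<in>E" "x\<in>e" using that Xe_def by auto
    thus ?thesis using two_elem Eg by metis
  qed
  have finXe: "finite Xe" using finE Xe_def by simp
  have Tne: "T K \<noteq> {}" if "K\<in>M" for K
  proof -
    have "K \<inter> N \<noteq> {}" using that M_def by simp
    then obtain w where "w\<in>K" "w \<in> N" by blast
    hence "w\<in>K" "{x,w}\<in>E" unfolding N_def by auto
    thus ?thesis unfolding T_def Xe_def by auto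
  qed
  have Tdisj: "T K1 \<inter> T K2 = {}" if "K1\<in>M" "K2\<in>M" "K1\<noteq>K2" for K1 K2
  proof (rule ccontr)
    assume "T K1 \<inter> T K2 \<noteq> {}"
    then obtain e where e: "e\<in>Xe" "e\<inter>K1\<noteq>{}" "e\<inter>K2\<noteq>{}" unfolding T_def by auto
    obtain w where w: "e = {x,w}" using xedge e by blast
    have K12: "K1 \<in> KS" "K2 \<in> KS" using that unfolding M_def by auto
    have "x \<notin> K1" "x \<notin> K2" using K12 KSsub unfolding Vx_def by blast+
    hence "w\<in>K1" "w\<in>K2" using e w by auto
    moreover note K12
    ultimately show False using F7 that(3) by blast
  qed
  have finM: "finite M" using finKS M_def by simp
  have sumT: "(\<Sum>K\<in>M. card (T K)) \<le> d"
  proof -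
    have finT: "\<forall>K\<in>M. finite (T K)" using finXe unfolding T_def by simp
    have "card (\<Union>(T ` M)) = (\<Sum>K\<in>M. card (T K))"
      by (rule card_UN_disjoint[OF finM finT]) (use Tdisj in blast)
    hence "(\<Sum>K\<in>M. card (T K)) = card (\<Union>(T ` M))" by simp
    also have "\<dots> \<le> card Xe" using finXe by (intro card_mono) (auto simp: T_def)
    finally show ?thesis using dXe by simp
  qed
  define A where "A = {K\<in>M. card (T K) = 1}"
  have finA: "finite A" using finM A_def by simp
  have cycA: "\<exists>C\<subseteq>K. is_cycle E C" if "K\<in>A" for K
  proof -
    have KM: "K\<in>M" using that A_def by simp
    hence KM: "K\<in>M" "K\<in>KS" using M_def by auto
    have "card (T K) = 1" using that A_def by simp
    then obtain e0 where e0: "T K = {e0}" by (rule card_1_singletonE)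
    have "e0 \<in> Xe" "e0 \<inter> K \<noteq> {}" using e0 unfolding T_def by auto
    then obtain v0 where v0a: "e0 = {x,v0}" using xedge by blast
    have "x \<notin> K" using KM(2) KSsub unfolding Vx_def by blast
    hence v0: "e0 = {x,v0}" "v0\<in>K" using v0a \<open>e0 \<inter> K \<noteq> {}\<close> by auto
    define F where "F = {e\<in>E. e \<subseteq> K}"
    have key: "e \<subseteq> K \<or> e = e0" if eE: "e\<in>E" "u\<in>e" "u\<in>K" for e u
    proof -
      have ce: "card e = 2" using Eg[OF eE(1)] by simp
      obtain w where w: "e = {u,w}" "w\<noteq>u" using two_elem[OF ce eE(2)] by blast
      show ?thesis
      proof (cases "w = x")
        case True
        hence "e \<in> T K" unfolding T_def Xe_def using eE w by auto
        thus ?thesis using e0 by auto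
      next
        case False
        have uV: "u\<in>Vx" using eE KM KSsub by auto
        have "w\<in>Vx" using Eg[OF eE(1)] w False Vx_def by auto
        hence "(u,w)\<in>R" using adjE uV eE w by simp
        hence "w \<in> comp u" using \<open>w\<in>Vx\<close> comp_def by simp
        moreover have "K = comp u" using KM eE unfolding KS_def by (metis F6 imageE)
        ultimately show ?thesis using w eE by auto
      qed
    qed
    have finF: "finite F" using finE F_def by simp
    have "\<exists>C\<subseteq>K. is_cycle F C"
    proof (rule cycle_exists[of K F v0])
      show "finite K" using finK KM by simp
      show "\<forall>e\<in>F. e \<subseteq> K \<and> card e = 2" using Eg F_def by auto
      show "v0 \<in> K" using v0 by simp
      show "\<forall>v\<in>K-{v0}. 2 \<le> card {e\<in>F. v\<in>e}"
      proof
        fix v assume v: "v\<in>K-{v0}"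
        have "x \<noteq> v" "v \<in> V" using v KM KSsub Vx_def by auto
        have "{e\<in>E. v\<in>e} \<subseteq> {e\<in>F. v\<in>e}"
          using key v v0 \<open>x\<noteq>v\<close> unfolding F_def by auto
        hence "card {e\<in>E. v\<in>e} \<le> card {e\<in>F. v\<in>e}" using finF by (intro card_mono) auto
        moreover have "2 \<le> card {e\<in>E. v\<in>e}" using assms(4) \<open>v\<in>V\<close> unfolding degree_def by blast
        ultimately show "2 \<le> card {e\<in>F. v\<in>e}" by simp
      qed
      show "{e\<in>F. v0\<in>e} \<noteq> {}"
      proof
        assume emp: "{e\<in>F. v0\<in>e} = {}"
        have "{e\<in>E. v0\<in>e} \<subseteq> {e0}"
        proof
          fix e assume e: "e \<in> {e\<in>E. v0\<in>e}"
          hence "e \<subseteq> K \<or> e = e0" using key[of e v0] v0(2) by blast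
          moreover have "\<not> e \<subseteq> K" using e emp unfolding F_def by blast
          ultimately show "e \<in> {e0}" by simp
        qed
        hence "card {e\<in>E. v0\<in>e} \<le> card {e0}" by (intro card_mono) auto
        hence c1: "card {e\<in>E. v0\<in>e} \<le> 1" by simp
        have "v0\<in>V" using v0(2) KSsub[OF KM(2)] unfolding Vx_def by blast
        hence "2 \<le> card {e\<in>E. v0\<in>e}" using assms(4) unfolding degree_def by blast
        with c1 show False by simp
      qed
    qed
    then obtain C where "C \<subseteq> K" "is_cycle F C" by blast
    moreover have "F \<subseteq> E" unfolding F_def by blast
    ultimately show ?thesis using is_cycle_mono by blast
  qed
  have cardA: "card A \<le> k - 1"
  proof (rule ccontr)
    assume "\<not> card A \<le> k - 1"
    hence kA: "k \<le> card A" using assms(2) by simp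
    obtain h where h: "bij_betw h {0..<card A} A" using ex_bij_betw_nat_finite finA by blast
    define Cs where "Cs i = (SOME C. C \<subseteq> h i \<and> is_cycle E C)" for i
    have Cs: "Cs i \<subseteq> h i \<and> is_cycle E (Cs i)" "h i \<in> A" if "i<k" for i
    proof -
      show hA: "h i \<in> A" using h that kA bij_betwE by fastforce
      show "Cs i \<subseteq> h i \<and> is_cycle E (Cs i)" unfolding Cs_def using cycA[OF hA] by (rule someI_ex)
    qed
    have "\<exists>Cs :: nat \<Rightarrow> 'a set.
      (\<forall>i<k. Cs i \<subseteq> V \<and> is_cycle E (Cs i)) \<and>
      (\<forall>i<k. \<forall>j<k. i \<noteq> j \<longrightarrow> Cs i \<inter> Cs j = {} \<and> (\<forall>u\<in>Cs i. \<forall>v\<in>Cs j. {u,v} \<notin> E))"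
    proof (intro exI conjI allI impI)
      fix i assume i: "i<k"
      show "is_cycle E (Cs i)" using Cs i by simp
      have "h i \<in> KS" using Cs(2)[OF i] unfolding A_def M_def by simp
      hence "h i \<subseteq> V" using KSsub unfolding Vx_def by blast
      thus "Cs i \<subseteq> V" using Cs(1)[OF i] by blast
    next
      fix i j assume ij: "i<k" "j<k" "i\<noteq>j"
      have hne: "h i \<noteq> h j" using h ij kA unfolding bij_betw_def inj_on_def by auto
      have KK: "h i \<in> KS" "h j \<in> KS" using Cs(2)[of i] Cs(2)[of j] ij unfolding A_def M_def by auto
      show "Cs i \<inter> Cs j = {}" using F7[OF KK] hne Cs ij by blast
      show "\<forall>u\<in>Cs i. \<forall>v\<in>Cs j. {u,v} \<notin> E" using F8[OF KK] hne Cs ij by blast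
    qed
    thus False using assms(3) unfolding Ok_free_def by blast
  qed
  have c3: "2 * card M \<le> d + (k - 1)"
  proof -
    have AM: "A \<subseteq> M" using A_def by auto
    have "(\<Sum>K\<in>M. card (T K)) = (\<Sum>K\<in>A. card (T K)) + (\<Sum>K\<in>M-A. card (T K))"
      using sum.subset_diff[OF AM finM, of "\<lambda>K. card (T K)"] by simp
    moreover have "(\<Sum>K\<in>A. card (T K)) = card A" using A_def by simp
    moreover have "(\<Sum>K\<in>M-A. card (T K)) \<ge> (\<Sum>K\<in>M-A. 2)"
    proof (rule sum_mono)
      fix K assume K: "K\<in>M-A"
      have "finite (T K)" using finXe T_def by simp
      hence "card (T K) \<noteq> 0" using Tne K by auto
      thus "2 \<le> card (T K)" using K A_def by auto
    qed
    moreover have "card M = card A + card (M-A)" using card_Diff_subset[OF finA AM] card_mono[OF finM AM] by simp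
    ultimately show ?thesis using sumT cardA by simp
  qed
  have cE: "card E = card Ex + d"
  proof -
    have "E = Ex \<union> Xe" "Ex \<inter> Xe = {}" unfolding Ex_def Xe_def by auto
    thus ?thesis using card_Un_disjoint[of Ex Xe] finE dXe by simp
  qed
  have cV: "card V = card Vx + 1" using finV assms(5) Vx_def by (simp add: card_Suc_Diff1 card_gt_0_iff Suc_pred[symmetric]) (metis card_0_eq empty_iff gr0I Suc_pred)
  have eq: "cycle_rank V E - cycle_rank (del_vertex_V V x) (del_vertex_E E x)
       = int d - 1 + int (card (components V E)) - int (card KS)"
    unfolding cycle_rank_def del_vertex_V_def del_vertex_E_def
    using cE cV KSc Vx_def Ex_def by simp
  have "int d - int (card M) \<le> int d - 1 + int (card (components V E)) - int (card KS)"
    using c1 c2 by simp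
  moreover have "real d - real k + 1 \<le> 2 * (real d - real (card M))"
  proof -
    have "2 * card M + 1 \<le> d + k" using c3 assms(2) by simp
    hence "real (2 * card M + 1) \<le> real (d + k)" by (simp only: of_nat_le_iff)
    thus ?thesis by simp
  qed
  ultimately show ?thesis using eq d_def by simp
qed

end
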